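(* For every integer $n \ge 2$ and every weighted undirected graph $G=(V,w)$ on $n$ vertices, $\mathrm{cdim}(G) \le 2n-3$.
   Context: A weighted undirected graph $G=(V,w)$ consists of a finite vertex set $V$ and a weight function $w$ assigning a nonnegative real number to each unordered pair $\{x,y\}$ of distinct vertices (an "edge slot"). The edge set is $E=\{e : w(e)>0\}$, and $m=|E|$. For $\emptyset \ne X \subsetneq V$, $\Delta(X)$ denotes the set of edges of $E$ with exactly one endpoint in $X$; such a set is a cut with shores $X$ and $V\setminus X$, and its weight is $w(\Delta(X))=\sum_{e\in\Delta(X)} w(e)$. A minimum cut (mincut) is a cut of minimum weight; $\mathcal{M}(G)$ is the set of mincuts. For $S\subseteq E$, $\chi(S)\in\{0,1\}^m$ is its characteristic vector indexed by the edges in $E$. The cut dimension is $\mathrm{cdim}(G)=\dim\,\mathrm{span}\{\chi(S): S\in\mathcal{M}(G)\}$. *)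

theory Defs
  imports "HOL-Analysis.Analysis" "HOL-Library.Function_Algebras"
begin

text \<open>A weighted undirected graph is given by a finite vertex set V and a weight
  function w on unordered pairs (2-element sets) of vertices.  Only the values
  of w on edge slots {x,y} with x,y in V, x distinct from y, matter.\<close>

definition edge_slots :: "'a set \<Rightarrow> 'a set set" where
  "edge_slots V = {e. \<exists>x\<in>V. \<exists>y\<in>V. x \<noteq> y \<and> e = {x, y}}"

definition edges :: "'a set \<Rightarrow> ('a set \<Rightarrow> real) \<Rightarrow> 'a set set" where
  "edges V w = {e \<in> edge_slots V. w e > 0}"

definition cut_edges :: "'a set \<Rightarrow> ('a set \<Rightarrow> real) \<Rightarrow> 'a set \<Rightarrow> 'a set set" where
  "cut_edges V w X = {e \<in> edges V w. card (e \<inter> X) = 1}"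

definition cut_weight :: "'a set \<Rightarrow> ('a set \<Rightarrow> real) \<Rightarrow> 'a set \<Rightarrow> real" where
  "cut_weight V w X = (\<Sum>e\<in>cut_edges V w X. w e)"

definition is_shore :: "'a set \<Rightarrow> 'a set \<Rightarrow> bool" where
  "is_shore V X \<longleftrightarrow> X \<noteq> {} \<and> X \<subset> V"

definition mincuts :: "'a set \<Rightarrow> ('a set \<Rightarrow> real) \<Rightarrow> 'a set set set" where
  "mincuts V w = {cut_edges V w X | X. is_shore V X \<and>
      (\<forall>Y. is_shore V Y \<longrightarrow> cut_weight V w X \<le> cut_weight V w Y)}"

text \<open>Characteristic vector of an edge set S, as a real-valued function on edge slots
  (zero outside S; for S a subset of E this is the vector in R^E).\<close>
definition char_vec :: "'a set set \<Rightarrow> 'a set \<Rightarrow> real" where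
  "char_vec S = (\<lambda>e. if e \<in> S then 1 else 0)"

definition fun_scale :: "real \<Rightarrow> ('b \<Rightarrow> real) \<Rightarrow> ('b \<Rightarrow> real)" where
  "fun_scale c f = (\<lambda>x. c * f x)"

definition cdim :: "'a set \<Rightarrow> ('a set \<Rightarrow> real) \<Rightarrow> nat" where
  "cdim V w = vector_space.dim fun_scale (char_vec ` mincuts V w)"

end

theory Submission
  imports Defs
begin


definition crosses :: "'a set \<Rightarrow> 'a set \<Rightarrow> bool" where
  "crosses A B \<longleftrightarrow> A \<inter> B \<noteq> {} \<and> \<not> A \<subseteq> B \<and> \<not> B \<subseteq> A"

definition laminar :: "'a set set \<Rightarrow> bool" where
  "laminar F \<longleftrightarrow> (\<forall>A\<in>F. \<forall>B\<in>F. \<not> crosses A B)"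

lemma laminar_B_unique:
  assumes lam: "laminar F" and ne: "{} \<notin> F"
    and S: "S \<in> F" "u \<in> S" "S - {u} \<in> F"
    and T: "T \<in> F" "u \<in> T" "T - {u} \<in> F"
    and sub: "S \<subseteq> T"
  shows "S = T"
proof -
  have "S - {u} \<noteq> {}" using S(3) ne by (metis)
  have "\<not> crosses (T - {u}) S" using lam T S unfolding laminar_def by blast
  then have "(T - {u}) \<inter> S = {} \<or> T - {u} \<subseteq> S \<or> S \<subseteq> T - {u}" unfolding crosses_def by blast
  then show ?thesis using \<open>S - {u} \<noteq> {}\<close> sub S T by blast
qed

lemma laminar_card:
  assumes "finite U"
  shows "laminar F \<Longrightarrow> F \<subseteq> Pow U \<Longrightarrow> {} \<notin> F \<Longrightarrow> card F \<le> 2 * card U - 1"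
  using assms
proof (induction U arbitrary: F rule: finite_induct)
  case empty
  then have "F = {}" by auto
  then show ?case by simp
next
  case (insert u U0)
  have finF: "finite F" using insert.prems(2) insert.hyps(1)
    by (meson finite_Pow_iff finite_insert rev_finite_subset)
  define F' where "F' = (\<lambda>S. S - {u}) ` F - {{}}"
  have lamF': "laminar F'"
    using insert.prems(1) unfolding laminar_def crosses_def F'_def by blast
  have subF': "F' \<subseteq> Pow U0" using insert.prems(2) unfolding F'_def by auto
  have neF': "{} \<notin> F'" unfolding F'_def by auto
  have IH: "card F' \<le> 2 * card U0 - 1" using insert.IH lamF' subF' neF' by blast
  define A where "A = {S\<in>F. S \<noteq> {u} \<and> (u \<in> S \<longrightarrow> S - {u} \<notin> F)}"
  define B where "B = {S\<in>F. u \<in> S \<and> S - {u} \<in> F}"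
  have FAB: "F \<subseteq> {{u}} \<union> A \<union> B" unfolding A_def B_def by auto
  have injA: "inj_on (\<lambda>S. S - {u}) A"
  proof (rule inj_onI)
    fix S T assume "S \<in> A" "T \<in> A" "S - {u} = T - {u}"
    then have SA: "S \<in> F" "u \<in> S \<longrightarrow> S - {u} \<notin> F" and TA: "T \<in> F" "u \<in> T \<longrightarrow> T - {u} \<notin> F"
      and eq: "S - {u} = T - {u}" unfolding A_def by auto
    have "u \<in> S \<longleftrightarrow> u \<in> T"
    proof
      assume "u \<in> S" show "u \<in> T"
      proof (rule ccontr)
        assume "u \<notin> T" then have "T - {u} = T" by simp
        then have "S - {u} \<in> F" using eq TA by simp
        then show False using SA \<open>u \<in> S\<close> by simp
      qed
    next
      assume "u \<in> T" show "u \<in> S"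
      proof (rule ccontr)
        assume "u \<notin> S" then have "S - {u} = S" by simp
        then have "T - {u} \<in> F" using eq SA by simp
        then show False using TA \<open>u \<in> T\<close> by simp
      qed
    qed
    then show "S = T"
    proof (cases "u \<in> S")
      case True
      then have "u \<in> T" using \<open>u \<in> S \<longleftrightarrow> u \<in> T\<close> by simp
      then show ?thesis using True eq insert_Diff[OF True] insert_Diff[of u T] by metis
    next
      case False
      then have "u \<notin> T" using \<open>u \<in> S \<longleftrightarrow> u \<in> T\<close> by simp
      then show ?thesis using False eq by simp
    qed
  qed
  have imA: "(\<lambda>S. S - {u}) ` A \<subseteq> F'"
  proof
    fix x assume "x \<in> (\<lambda>S. S - {u}) ` A"
    then obtain S where S: "S \<in> A" "x = S - {u}" by auto
    have "S \<noteq> {}" using S insert.prems(3) unfolding A_def by auto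
    then have "x \<noteq> {}" using S unfolding A_def by auto
    then show "x \<in> F'" using S unfolding F'_def A_def by auto
  qed
  have finF': "finite F'" using finF unfolding F'_def by auto
  have cA: "card A \<le> card F'"
    using card_inj_on_le[OF injA imA finF'] .
  have cB: "card B \<le> 1"
  proof -
    have "\<forall>S\<in>B. \<forall>T\<in>B. S = T"
    proof (intro ballI)
      fix S T assume "S \<in> B" "T \<in> B"
      then have S: "S \<in> F" "u \<in> S" "S - {u} \<in> F" and T: "T \<in> F" "u \<in> T" "T - {u} \<in> F"
        unfolding B_def by auto
      have "\<not> crosses S T" using insert.prems(1) S T unfolding laminar_def by blast
      then have "S \<subseteq> T \<or> T \<subseteq> S" using S T unfolding crosses_def by blast
      then show "S = T"
        using laminar_B_unique[OF insert.prems(1) insert.prems(3) S T]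
          laminar_B_unique[OF insert.prems(1) insert.prems(3) T S] by blast
    qed
    then show ?thesis using card_le_Suc0_iff_eq[of B] finF unfolding B_def by auto
  qed
  have finA: "finite A" "finite B" using finF unfolding A_def B_def by auto
  have "card F \<le> card ({{u}} \<union> A \<union> B)"
    using FAB finA by (intro card_mono) auto
  also have "\<dots> \<le> 1 + card A + card B"
    using card_Un_le[of "{{u}} \<union> A" B] card_Un_le[of "{{u}}" A] by simp
  finally have cF: "card F \<le> card F' + 2" using cA cB by linarith
  show ?case
  proof (cases "U0 = {}")
    case True
    then have "F \<subseteq> {{u}}" using insert.prems(2,3) by (force dest: subset_singletonD)
    then have "card F \<le> 1" using card_mono[of "{{u}}" F] by simp
    then show ?thesis using insert.hyps by simp
  next
    case False
    then have "card U0 \<ge> 1" using insert.hyps(1) by (simp add: Suc_leI card_gt_0_iff)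
    then show ?thesis using cF IH insert.hyps by simp
  qed
qed



lemma vs: "vector_space fun_scale"
  unfolding vector_space_def fun_scale_def by (auto simp: fun_eq_iff algebra_simps)

lemma ms: "module fun_scale"
  using vs module_iff_vector_space by blast

lemma card_pair_inter: "a \<noteq> b \<Longrightarrow> card ({a,b} \<inter> X) = 1 \<longleftrightarrow> (a \<in> X \<longleftrightarrow> b \<notin> X)"
  by (cases "a \<in> X"; cases "b \<in> X") auto

lemma edge_pair:
  assumes "e \<in> edge_slots V"
  obtains a b where "a \<in> V" "b \<in> V" "a \<noteq> b" "e = {a,b}"
    "\<And>Z. card (e \<inter> Z) = 1 \<longleftrightarrow> (a \<in> Z \<longleftrightarrow> b \<notin> Z)"
proof -
  from assms obtain a b where ab: "a \<in> V" "b \<in> V" "a \<noteq> b" "e = {a,b}"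
    unfolding edge_slots_def by blast
  show thesis using that[OF ab] card_pair_inter[OF ab(3)] ab(4) by simp
qed

lemma finite_edges: "finite V \<Longrightarrow> finite (edges V w)"
proof -
  assume "finite V"
  have "edges V w \<subseteq> Pow V" unfolding edges_def edge_slots_def by auto
  then show ?thesis using \<open>finite V\<close> by (meson finite_Pow_iff rev_finite_subset)
qed

definition minshore :: "'a set \<Rightarrow> ('a set \<Rightarrow> real) \<Rightarrow> 'a set \<Rightarrow> bool" where
  "minshore V w X \<longleftrightarrow> is_shore V X \<and> (\<forall>Y. is_shore V Y \<longrightarrow> cut_weight V w X \<le> cut_weight V w Y)"

lemma cw_sum: "finite V \<Longrightarrow>
  cut_weight V w X = (\<Sum>e\<in>edges V w. if card (e \<inter> X) = 1 then w e else 0)"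
  unfolding cut_weight_def cut_edges_def
  using sum.inter_filter[OF finite_edges, of V w "\<lambda>e. w e" "\<lambda>e. card (e \<inter> X) = 1"] by simp

lemma char_cut: "char_vec (cut_edges V w X) e = (if e \<in> edges V w \<and> card (e \<inter> X) = 1 then 1 else 0)"
  unfolding char_vec_def cut_edges_def by auto

lemma uncross:
  assumes fin: "finite V" and mX: "minshore V w X" and mY: "minshore V w Y"
    and ne: "X \<inter> Y \<noteq> {}" and nV: "X \<union> Y \<noteq> V"
  shows "minshore V w (X \<inter> Y)" "minshore V w (X \<union> Y)"
    "char_vec (cut_edges V w X) + char_vec (cut_edges V w Y) =
     char_vec (cut_edges V w (X \<inter> Y)) + char_vec (cut_edges V w (X \<union> Y))"
proof -
  define E where "E = edges V w"
  define f where "f Z e = (if card (e \<inter> Z) = 1 then w e else 0)" for Z e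
  define g where "g e = (if card (e \<inter> (X - Y)) = 1 \<and> card (e \<inter> (Y - X)) = 1 then w e else 0)" for e
  have pw: "f X e + f Y e = f (X \<inter> Y) e + f (X \<union> Y) e + 2 * g e" if "e \<in> E" for e
  proof -
    have "e \<in> edge_slots V" using that unfolding E_def edges_def by auto
    then obtain a b where h: "\<And>Z. card (e \<inter> Z) = 1 \<longleftrightarrow> (a \<in> Z \<longleftrightarrow> b \<notin> Z)"
      using edge_pair by metis
    show ?thesis unfolding f_def g_def h
      by (cases "a \<in> X"; cases "b \<in> X"; cases "a \<in> Y"; cases "b \<in> Y") simp_all
  qed
  have finE: "finite E" unfolding E_def using finite_edges[OF fin] .
  have cw: "cut_weight V w Z = sum (f Z) E" for Z
    unfolding f_def E_def using cw_sum[OF fin] by simp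
  have eq: "cut_weight V w X + cut_weight V w Y =
      cut_weight V w (X \<inter> Y) + cut_weight V w (X \<union> Y) + 2 * sum g E"
    unfolding cw using pw by (simp add: sum.distrib[symmetric] sum_distrib_left)
  have shX: "is_shore V X" and shY: "is_shore V Y" using mX mY unfolding minshore_def by auto
  have shI: "is_shore V (X \<inter> Y)" using shX ne unfolding is_shore_def by auto
  have shU: "is_shore V (X \<union> Y)" using shX shY nV unfolding is_shore_def by auto
  have l1: "cut_weight V w X \<le> cut_weight V w (X \<inter> Y)" using mX shI unfolding minshore_def by auto
  have l2: "cut_weight V w Y \<le> cut_weight V w (X \<union> Y)" using mY shU unfolding minshore_def by auto
  have gnn: "\<forall>e\<in>E. 0 \<le> g e" unfolding g_def E_def edges_def by auto
  have sg: "0 \<le> sum g E" using gnn by (simp add: sum_nonneg)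
  have "sum g E \<le> 0" using eq l1 l2 by linarith
  then have "sum g E = 0" using sg by linarith
  then have g0: "\<forall>e\<in>E. g e = 0" using sum_nonneg_eq_0_iff[OF finE] gnn by blast
  have cI: "cut_weight V w (X \<inter> Y) \<le> cut_weight V w X" using eq l2 sg by linarith
  have cU: "cut_weight V w (X \<union> Y) \<le> cut_weight V w Y" using eq l1 sg by linarith
  show "minshore V w (X \<inter> Y)"
    unfolding minshore_def using shI cI mX[unfolded minshore_def] by (meson order_trans)
  show "minshore V w (X \<union> Y)"
    unfolding minshore_def using shU cU mY[unfolded minshore_def] by (meson order_trans)
  show "char_vec (cut_edges V w X) + char_vec (cut_edges V w Y) =
     char_vec (cut_edges V w (X \<inter> Y)) + char_vec (cut_edges V w (X \<union> Y))"
  proof (rule ext)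
    fix e
    show "(char_vec (cut_edges V w X) + char_vec (cut_edges V w Y)) e =
     (char_vec (cut_edges V w (X \<inter> Y)) + char_vec (cut_edges V w (X \<union> Y))) e"
    proof (cases "e \<in> E")
      case False
      then show ?thesis unfolding char_cut E_def by simp
    next
      case True
      then have we: "w e > 0" and es: "e \<in> edge_slots V" unfolding E_def edges_def by auto
      then obtain a b where h: "\<And>Z. card (e \<inter> Z) = 1 \<longleftrightarrow> (a \<in> Z \<longleftrightarrow> b \<notin> Z)"
        using edge_pair es by metis
      have "g e = 0" using g0 True by blast
      then have nc: "\<not> ((a \<in> X - Y \<longleftrightarrow> b \<notin> X - Y) \<and> (a \<in> Y - X \<longleftrightarrow> b \<notin> Y - X))"
        using we unfolding g_def h by (auto split: if_splits)
      show ?thesis using True nc unfolding char_cut E_def[symmetric] h plus_fun_def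
        by (cases "a \<in> X"; cases "b \<in> X"; cases "a \<in> Y"; cases "b \<in> Y") simp_all
    qed
  qed
qed



lemma cross_int: "crosses X Y \<Longrightarrow> \<not> crosses Z Y \<Longrightarrow> crosses (X \<inter> Y) Z \<Longrightarrow> crosses X Z"
  unfolding crosses_def by blast

lemma cross_un: "crosses X Y \<Longrightarrow> \<not> crosses Z Y \<Longrightarrow> crosses (X \<union> Y) Z \<Longrightarrow> crosses X Z"
  unfolding crosses_def by blast

lemma cross_sym: "crosses X Y \<longleftrightarrow> crosses Y X"
  unfolding crosses_def by blast

lemma cut_compl:
  assumes "X \<subseteq> V" shows "cut_edges V w (V - X) = cut_edges V w X"
proof -
  have "card (e \<inter> (V - X)) = 1 \<longleftrightarrow> card (e \<inter> X) = 1" if "e \<in> edges V w" for e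
  proof -
    have es: "e \<in> edge_slots V" using that unfolding edges_def by auto
    then obtain a b where ab: "a \<in> V" "b \<in> V"
      "\<And>Z. card (e \<inter> Z) = 1 \<longleftrightarrow> (a \<in> Z \<longleftrightarrow> b \<notin> Z)"
      using edge_pair[OF es] by metis
    show ?thesis unfolding ab(3) using ab(1,2) by auto
  qed
  then show ?thesis unfolding cut_edges_def by auto
qed

theorem theorem1:
  fixes V :: "'a set" and w :: "'a set \<Rightarrow> real" and n :: nat
  assumes "finite V" and "card V = n" and "n \<ge> 2"
    and "\<And>e. e \<in> edge_slots V \<Longrightarrow> w e \<ge> 0"
  shows "cdim V w \<le> 2 * n - 3"
proof -
  have fin: "finite V" by fact
  have "V \<noteq> {}" using assms by auto
  then obtain r where r: "r \<in> V" by auto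
  define U where "U = V - {r}"
  have finU: "finite U" unfolding U_def using fin by simp
  have cU: "card U = n - 1" unfolding U_def using fin r assms(2) by simp
  define vec where "vec Z = char_vec (cut_edges V w Z)" for Z
  define C where "C = {X. X \<subseteq> U \<and> X \<noteq> {} \<and> minshore V w X}"
  define Lam where "Lam = {L. L \<subseteq> C \<and> laminar L}"
  have CU: "C \<subseteq> Pow U" unfolding C_def by auto
  have finC: "finite C" using CU finU by (meson finite_Pow_iff rev_finite_subset)
  have finLam: "finite Lam" unfolding Lam_def using finC by simp
  have "{} \<in> Lam" unfolding Lam_def laminar_def by simp
  then have "Max (card ` Lam) \<in> card ` Lam" using finLam by (intro Max_in) auto
  then obtain L where L: "L \<in> Lam" and Lmax: "card L = Max (card ` Lam)" by auto
  have Lmax': "card L' \<le> card L" if "L' \<in> Lam" for L'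
    unfolding Lmax using finLam that by simp
  have LC: "L \<subseteq> C" and lamL: "laminar L" using L unfolding Lam_def by auto
  have finL: "finite L" using LC finC by (rule rev_finite_subset[rotated])
  let ?sp = "module.span fun_scale (vec ` L)"
  have main: "X \<in> C \<Longrightarrow> vec X \<in> ?sp" for X
  proof (induction "card {Y\<in>L. crosses X Y}" arbitrary: X rule: less_induct)
    case less
    show ?case
    proof (cases "\<exists>Y\<in>L. crosses X Y")
      case True
      then obtain Y where Y: "Y \<in> L" "crosses X Y" by auto
      have YC: "Y \<in> C" using Y LC by auto
      have mX: "minshore V w X" and XU: "X \<subseteq> U" using less.prems unfolding C_def by auto
      have mY: "minshore V w Y" and YU: "Y \<subseteq> U" using YC unfolding C_def by auto
      have ne: "X \<inter> Y \<noteq> {}" using Y unfolding crosses_def by auto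
      have nV: "X \<union> Y \<noteq> V" using XU YU r unfolding U_def by auto
      note unc = uncross[OF fin mX mY ne nV]
      have IC: "X \<inter> Y \<in> C" using unc(1) XU ne unfolding C_def by auto
      have UC: "X \<union> Y \<in> C" using unc(2) XU YU ne unfolding C_def by auto
      have nc: "\<not> crosses Z Y" if "Z \<in> L" for Z using lamL that Y(1) unfolding laminar_def by blast
      have finS: "finite {Y\<in>L. crosses X Y}" using finL by simp
      have s1: "{Z\<in>L. crosses (X \<inter> Y) Z} \<subset> {Z\<in>L. crosses X Z}"
      proof
        show "{Z\<in>L. crosses (X \<inter> Y) Z} \<subseteq> {Z\<in>L. crosses X Z}"
          using cross_int[OF Y(2)] nc by blast
        have "\<not> crosses (X \<inter> Y) Y" unfolding crosses_def by blast
        then show "{Z\<in>L. crosses (X \<inter> Y) Z} \<noteq> {Z\<in>L. crosses X Z}" using Y by blast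
      qed
      have s2: "{Z\<in>L. crosses (X \<union> Y) Z} \<subset> {Z\<in>L. crosses X Z}"
      proof
        show "{Z\<in>L. crosses (X \<union> Y) Z} \<subseteq> {Z\<in>L. crosses X Z}"
          using cross_un[OF Y(2)] nc by blast
        have "\<not> crosses (X \<union> Y) Y" unfolding crosses_def by blast
        then show "{Z\<in>L. crosses (X \<union> Y) Z} \<noteq> {Z\<in>L. crosses X Z}" using Y by blast
      qed
      have i1: "vec (X \<inter> Y) \<in> ?sp"
        using less.hyps[OF psubset_card_mono[OF finS s1] IC] .
      have i2: "vec (X \<union> Y) \<in> ?sp"
        using less.hyps[OF psubset_card_mono[OF finS s2] UC] .
      have i3: "vec Y \<in> ?sp" using Y(1) module.span_base[OF ms] by blast
      have "vec X = vec (X \<inter> Y) + vec (X \<union> Y) - vec Y"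
        using unc(3) unfolding vec_def by (simp add: algebra_simps)
      then show ?thesis
        using module.span_add[OF ms i1 i2] module.span_diff[OF ms _ i3] by metis
    next
      case False
      have nXX: "\<not> crosses X X" unfolding crosses_def by blast
      have "\<not> crosses A B" if "A \<in> insert X L" "B \<in> insert X L" for A B
      proof (cases "A = X")
        case True
        then show ?thesis
        proof (cases "B = X")
          case True then show ?thesis using \<open>A = X\<close> nXX by simp
        next
          case False then have "B \<in> L" using that by simp
          then show ?thesis using \<open>A = X\<close> \<open>\<not> (\<exists>Y\<in>L. crosses X Y)\<close> by blast
        qed
      next
        case False then have AL: "A \<in> L" using that by simp
        then show ?thesis
        proof (cases "B = X")
          case True
          have "\<not> crosses X A" using AL \<open>\<not> (\<exists>Y\<in>L. crosses X Y)\<close> by blast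
          then show ?thesis using True cross_sym[of A X] by simp
        next
          case False then have "B \<in> L" using that by simp
          then show ?thesis using AL lamL unfolding laminar_def by blast
        qed
      qed
      then have "laminar (insert X L)" unfolding laminar_def by blast
      then have "insert X L \<in> Lam" using LC less.prems unfolding Lam_def by auto
      then have "card (insert X L) \<le> card L" by (rule Lmax')
      then have "X \<in> L"
      proof -
        assume a: "card (insert X L) \<le> card L"
        show "X \<in> L"
        proof (rule ccontr)
          assume "X \<notin> L"
          then have "card (insert X L) = Suc (card L)" using finL by simp
          then show False using a by simp
        qed
      qed
      then show ?thesis using module.span_base[OF ms] by blast
    qed
  qed
  have sub: "char_vec ` mincuts V w \<subseteq> ?sp"
  proof
    fix v assume "v \<in> char_vec ` mincuts V w"
    then obtain X where X: "minshore V w X" "v = vec X"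
      unfolding mincuts_def minshore_def vec_def by auto
    have XV: "X \<subseteq> V" "X \<noteq> {}" "X \<noteq> V" using X(1) unfolding minshore_def is_shore_def by auto
    show "v \<in> ?sp"
    proof (cases "r \<in> X")
      case False
      then have "X \<in> C" using X XV unfolding C_def U_def by auto
      then show ?thesis using main X by simp
    next
      case True
      have eqv: "vec (V - X) = vec X" unfolding vec_def using cut_compl[OF XV(1)] by simp
      have cw: "cut_weight V w (V - X) = cut_weight V w X"
        unfolding cut_weight_def using cut_compl[OF XV(1)] by simp
      have "is_shore V (V - X)" using XV unfolding is_shore_def by auto
      then have "minshore V w (V - X)" using X(1) cw unfolding minshore_def by auto
      then have "V - X \<in> C" using True XV unfolding C_def U_def by auto
      then show ?thesis using main X eqv by metis
    qed
  qed
  have "cdim V w \<le> card (vec ` L)"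
    unfolding cdim_def
    using vector_space.dim_le_card[OF vs sub] finL by simp
  also have "\<dots> \<le> card L" using finL by (rule card_image_le)
  also have "\<dots> \<le> 2 * card U - 1"
    using laminar_card[OF finU lamL] LC CU unfolding C_def by auto
  finally show ?thesis using cU assms(3) by linarith
qed

end
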